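(* Let $\mathfrak g$ be of type $A_n$, $b\in\mathcal B(\infty)$, $i\in I$, and let $m=m_i(b)$ and $m^\ast=m_i^\ast(b)$. Then for $1\le s\le i$, $\Sigma^\ast_s(\widetilde f_i(b))=\Sigma^\ast_s(b)+1$ if $m=1$ and $s=1$, and $\Sigma^\ast_s(\widetilde f_i(b))=\Sigma^\ast_s(b)$ otherwise; and for $1\le s\le n+1-i$, $\Sigma_s(\widetilde f_i^\ast(b))=\Sigma_s(b)+1$ if $m^\ast=1$ and $s=1$, and $\Sigma_s(\widetilde f_i^\ast(b))=\Sigma_s(b)$ otherwise.
   Context: $I=\{1,\dots,n\}$. $\mathcal I=\{(s,t)\in\mathbb Z_{>0}\times I:s+t\le n+1\}$; $\mathcal B(\infty)$ is the set of $b=(b_{s,t})_{(s,t)\in\mathcal I}\in\mathbb Z_{\ge0}^{\mathcal I}$ with $b_{1,k}\ge b_{2,k-1}\ge\dots\ge b_{k,1}$ for $1\le k\le n$. Convention: $b_{s,t}=0$, $\mathbf e_{s,t}=0$ for $(s,t)\notin\mathcal I$. $\partial_{s,t}(b)=b_{s,t}-b_{s,t+1}-b_{s+1,t-1}+b_{s+1,t}$, $\partial^\ast_{s,t}(b)=b_{s-1,t}-b_{s-1,t+1}-b_{s,t-1}+b_{s,t}$. For $1\le k\le n+1-i$: $\Sigma_k(b)=\sum_{s=k}^{n+1-i}\partial_{s,i}(b)$, $m_i(b)$ the smallest $k$ maximizing $\Sigma_k(b)$, $\widetilde f_i(b)=b+\mathbf e_{m_i(b),i}$. For $1\le k\le i$: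 $\Sigma^\ast_k(b)=\sum_{t=1}^k\partial^\ast_{t,i+1-t}(b)$, $m_i^\ast(b)$ the smallest $k$ maximizing $\Sigma^\ast_k(b)$, $\widetilde f_i^\ast(b)=b+\sum_{t=1}^{m_i^\ast(b)}(\mathbf e_{t,i+1-t}-\mathbf e_{t-1,i+1-t})$. *)

theory Defs
  imports Main
begin

text \<open>Elements b of B(infinity) are represented as functions nat => nat => int,
  required to vanish outside \<I> (the convention b_{s,t} = 0 off \<I>).\<close>

definition Idx :: "nat \<Rightarrow> (nat \<times> nat) set" where
  "Idx n = {(s,t). 1 \<le> s \<and> 1 \<le> t \<and> t \<le> n \<and> s + t \<le> n + 1}"

definition Binf :: "nat \<Rightarrow> (nat \<Rightarrow> nat \<Rightarrow> int) set" where
  "Binf n = {b. (\<forall>s t. (s,t) \<notin> Idx n \<longrightarrow> b s t = 0)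
              \<and> (\<forall>s t. (s,t) \<in> Idx n \<longrightarrow> 0 \<le> b s t)
              \<and> (\<forall>k s. 1 \<le> k \<and> k \<le> n \<and> 1 \<le> s \<and> s < k \<longrightarrow> b (s+1) (k-s) \<le> b s (k+1-s))}"

definition ev :: "nat \<Rightarrow> nat \<Rightarrow> nat \<Rightarrow> nat \<Rightarrow> nat \<Rightarrow> int" where
  "ev n s t = (\<lambda>s' t'. if (s',t') = (s,t) \<and> (s,t) \<in> Idx n then 1 else 0)"

definition part :: "(nat \<Rightarrow> nat \<Rightarrow> int) \<Rightarrow> nat \<Rightarrow> nat \<Rightarrow> int" where
  "part b s t = b s t - b s (t+1) - b (s+1) (t-1) + b (s+1) t"

definition partst :: "(nat \<Rightarrow> nat \<Rightarrow> int) \<Rightarrow> nat \<Rightarrow> nat \<Rightarrow> int" where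
  "partst b s t = b (s-1) t - b (s-1) (t+1) - b s (t-1) + b s t"

definition Sig :: "nat \<Rightarrow> nat \<Rightarrow> (nat \<Rightarrow> nat \<Rightarrow> int) \<Rightarrow> nat \<Rightarrow> int" where
  "Sig n i b k = (\<Sum>s=k..n+1-i. part b s i)"

definition Sigst :: "nat \<Rightarrow> (nat \<Rightarrow> nat \<Rightarrow> int) \<Rightarrow> nat \<Rightarrow> int" where
  "Sigst i b k = (\<Sum>t=1..k. partst b t (i+1-t))"

definition mi :: "nat \<Rightarrow> nat \<Rightarrow> (nat \<Rightarrow> nat \<Rightarrow> int) \<Rightarrow> nat" where
  "mi n i b = (LEAST k. 1 \<le> k \<and> k \<le> n+1-i \<and>
                 (\<forall>k'. 1 \<le> k' \<and> k' \<le> n+1-i \<longrightarrow> Sig n i b k' \<le> Sig n i b k))"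

definition mist :: "nat \<Rightarrow> (nat \<Rightarrow> nat \<Rightarrow> int) \<Rightarrow> nat" where
  "mist i b = (LEAST k. 1 \<le> k \<and> k \<le> i \<and>
                 (\<forall>k'. 1 \<le> k' \<and> k' \<le> i \<longrightarrow> Sigst i b k' \<le> Sigst i b k))"

definition fti :: "nat \<Rightarrow> nat \<Rightarrow> (nat \<Rightarrow> nat \<Rightarrow> int) \<Rightarrow> nat \<Rightarrow> nat \<Rightarrow> int" where
  "fti n i b = (\<lambda>s t. b s t + ev n (mi n i b) i s t)"

definition ftist :: "nat \<Rightarrow> nat \<Rightarrow> (nat \<Rightarrow> nat \<Rightarrow> int) \<Rightarrow> nat \<Rightarrow> nat \<Rightarrow> int" where
  "ftist n i b = (\<lambda>s t. b s t + (\<Sum>u=1..mist i b. ev n u (i+1-u) s t - ev n (u-1) (i+1-u) s t))"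

end

theory Submission
  imports Defs
begin

lemma Sigst_tele:
  assumes "\<And>t. b 0 t = 0" and "s \<le> i"
  shows "Sigst i b s = b s (i+1-s) - b s (i-s)"
  using assms(2)
proof (induction s)
  case 0
  then show ?case by (simp add: Sigst_def assms(1))
next
  case (Suc s)
  have "Sigst i b (Suc s) = Sigst i b s + partst b (Suc s) (i+1-Suc s)"
    by (simp add: Sigst_def)
  also have "\<dots> = b (Suc s) (i+1-Suc s) - b (Suc s) (i-Suc s)"
    using Suc by (simp add: partst_def Suc_diff_le diff_Suc)
  finally show ?case .
qed

lemma sum_ev1:
  "(\<Sum>u=1..M. ev n u (f u) x y) = (if 1 \<le> x \<and> x \<le> M \<and> y = f x \<and> (x, f x) \<in> Idx n then 1 else 0)"
proof -
  have "(\<Sum>u=1..M. ev n u (f u) x y) = (\<Sum>u\<in>{1..M}. if u = x then (if y = f x \<and> (x, f x) \<in> Idx n then 1 else 0) else 0)"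
    by (rule sum.cong) (auto simp: ev_def)
  also have "\<dots> = (if 1 \<le> x \<and> x \<le> M \<and> y = f x \<and> (x, f x) \<in> Idx n then 1 else 0)"
    by (subst sum.delta; auto)
  finally show ?thesis .
qed

lemma sum_ev2:
  "(\<Sum>u=1..M. ev n (u-1) (f u) x y) = (if x+1 \<le> M \<and> y = f (x+1) \<and> (x, f (x+1)) \<in> Idx n then 1 else 0)"
proof -
  have "(\<Sum>u=1..M. ev n (u-1) (f u) x y) = (\<Sum>u\<in>{1..M}. if u = x+1 then (if y = f (x+1) \<and> (x, f (x+1)) \<in> Idx n then 1 else 0) else 0)"
    by (rule sum.cong) (auto simp: ev_def)
  also have "\<dots> = (if x+1 \<le> M \<and> y = f (x+1) \<and> (x, f (x+1)) \<in> Idx n then 1 else 0)"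
    by (subst sum.delta; auto)
  finally show ?thesis .
qed

lemma Sig_add:
  "Sig n i (\<lambda>s t. b s t + d s t) k = Sig n i b k + Sig n i d k"
  by (simp add: Sig_def part_def sum.distrib[symmetric] algebra_simps)

lemma mist_range:
  assumes "1 \<le> i"
  shows "1 \<le> mist i b \<and> mist i b \<le> i"
proof -
  have fin: "finite (Sigst i b ` {1..i})" by simp
  have ne: "Sigst i b ` {1..i} \<noteq> {}" using assms by auto
  obtain k where k: "k \<in> {1..i}" "Sigst i b k = Max (Sigst i b ` {1..i})"
    using Max_in[OF fin ne] by auto
  have P: "1 \<le> k \<and> k \<le> i \<and> (\<forall>k'. 1 \<le> k' \<and> k' \<le> i \<longrightarrow> Sigst i b k' \<le> Sigst i b k)"
    using k fin by auto
  let ?P = "\<lambda>k. 1 \<le> k \<and> k \<le> i \<and> (\<forall>k'. 1 \<le> k' \<and> k' \<le> i \<longrightarrow> Sigst i b k' \<le> Sigst i b k)"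
  have "?P (LEAST k. ?P k)" using P by (rule LeastI)
  then show ?thesis unfolding mist_def by blast
qed

lemma d_aux: fixes M i n s :: nat assumes "1 \<le> s" "1 \<le> M" "M \<le> i" "1 \<le> i" "i \<le> n"
  shows "(if 1 \<le> s+1 \<and> s+1 \<le> M \<and> i-1 = i+1-(s+1) \<and> (s+1, i+1-(s+1)) \<in> Idx n then 1 else 0)
     - (if s+1+1 \<le> M \<and> i-1 = i+1-(s+1+1) \<and> (s+1, i+1-(s+1+1)) \<in> Idx n then 1 else (0::int)) = (if s = 1 \<and> 2 \<le> M then 1 else 0)"
proof (cases "s = 1")
  case True
  show ?thesis
  proof (cases "M = 1")
    case True
    then show ?thesis using \<open>s = 1\<close> by simp
  next
    case False
    then have "2 \<le> M" "2 \<le> i" using assms by auto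
    have "(s+1, i+1-(s+1)) \<in> Idx n" "i-1 = i+1-(s+1)" "i-1 \<noteq> i+1-(s+1+1)"
      using \<open>s = 1\<close> \<open>2 \<le> i\<close> assms by (auto simp: Idx_def)
    then show ?thesis using \<open>s = 1\<close> \<open>2 \<le> M\<close> by simp
  qed
next
  case False
  have "\<not>(s+1 \<le> M \<and> i-1 = i+1-(s+1))" using assms False by arith
  moreover have "\<not>(s+1+1 \<le> M \<and> i-1 = i+1-(s+1+1))" using assms False by arith
  ultimately show ?thesis using False by auto
qed

theorem lemma6p8:
  fixes n i :: nat and b :: "nat \<Rightarrow> nat \<Rightarrow> int"
  assumes "b \<in> Binf n" and "1 \<le> i" and "i \<le> n"
  shows "(\<forall>s. 1 \<le> s \<and> s \<le> i \<longrightarrow>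
            Sigst i (fti n i b) s =
              (if mi n i b = 1 \<and> s = 1 then Sigst i b s + 1 else Sigst i b s))
       \<and> (\<forall>s. 1 \<le> s \<and> s \<le> n + 1 - i \<longrightarrow>
            Sig n i (ftist n i b) s =
              (if mist i b = 1 \<and> s = 1 then Sig n i b s + 1 else Sig n i b s))"
proof (intro conjI allI impI)
  have b0: "\<And>t. b 0 t = 0" using assms(1) by (auto simp: Binf_def Idx_def)
  fix s assume s: "1 \<le> s \<and> s \<le> i"
  have f0: "\<And>t. fti n i b 0 t = 0" using b0 by (simp add: fti_def ev_def Idx_def)
  have e1: "ev n (mi n i b) i s (Suc i - s) = (if mi n i b = 1 \<and> s = 1 then 1 else 0)"
    unfolding ev_def using s assms(2,3) by (auto simp: Idx_def)
  have e2: "ev n (mi n i b) i s (i-s) = 0"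
    unfolding ev_def using s by auto
  show "Sigst i (fti n i b) s =
              (if mi n i b = 1 \<and> s = 1 then Sigst i b s + 1 else Sigst i b s)"
    unfolding Sigst_tele[of "fti n i b" s i, OF f0 conjunct2[OF s]] Sigst_tele[of b s i, OF b0 conjunct2[OF s]]
    using s assms(2,3) by (simp add: fti_def e1 e2)
next
  fix k assume k: "1 \<le> k \<and> k \<le> n + 1 - i"
  define M where "M = mist i b"
  have M: "1 \<le> M" "M \<le> i" using mist_range[OF assms(2)] M_def by auto
  define d where "d = (\<lambda>s t. (\<Sum>u=1..M. ev n u (i+1-u) s t - ev n (u-1) (i+1-u) s t))"
  have dd: "d s t = (if 1 \<le> s \<and> s \<le> M \<and> t = i+1-s \<and> (s, i+1-s) \<in> Idx n then 1 else 0)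
     - (if s+1 \<le> M \<and> t = i+1-(s+1) \<and> (s, i+1-(s+1)) \<in> Idx n then 1 else 0)" for s t
    unfolding d_def sum_subtractf sum_ev1[of n "\<lambda>u. i+1-u"] sum_ev2[of n "\<lambda>u. i+1-u"] by simp
  have pd: "part d s i = (if s = 1 \<and> M = 1 then 1 else 0)" if "1 \<le> s" for s
  proof -
    have "d s i = (if s = 1 then 1 else 0)" using that M assms(2,3) by (auto simp: dd Idx_def)
    moreover have "d s (i+1) = 0" using that M assms(2,3) by (auto simp: dd Idx_def)
    moreover have "d (s+1) i = 0" using that M assms(2,3) by (auto simp: dd Idx_def)
    moreover have "d (s+1) (i-1) = (if s = 1 \<and> 2 \<le> M then 1 else 0)" unfolding dd by (rule d_aux[OF that M(1) M(2) assms(2) assms(3)])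
    ultimately show ?thesis using M by (auto simp: part_def)
  qed
  have "Sig n i d k = (\<Sum>s\<in>{k..n+1-i}. if s = 1 then (if M = 1 then 1 else 0) else 0)"
    unfolding Sig_def by (rule sum.cong) (use k pd in auto)
  also have "\<dots> = (if k = 1 \<and> M = 1 then 1 else 0)"
    using k by (subst sum.delta; auto)
  finally have Sd: "Sig n i d k = (if k = 1 \<and> M = 1 then 1 else 0)" .
  have "ftist n i b = (\<lambda>s t. b s t + d s t)"
    by (simp add: ftist_def d_def M_def)
  then show "Sig n i (ftist n i b) k =
              (if mist i b = 1 \<and> k = 1 then Sig n i b k + 1 else Sig n i b k)"
    using Sd Sig_add[of n i b d k] M_def by auto
qed

end
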